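(* Under the assumptions of the semi-offline identification result (no direct effect, MAR $\pi_\beta(R\mid X_{(1)})=\pi_\beta(R\mid X_o)$, consistency, no interference, static features, semi-offline positivity), if the Q-function model equals the true semi-offline Q-function $Q_{Semi}$, then $\mathbb{E}_{p'}[V^0_{Semi}]=J$, where $V^0_{Semi}=\sum_{A'^1}Q_{Semi}(\underline X'^0,A'^1,X_o)\pi_\alpha(A'^1\mid \underline X'^0)$; hence the direct-method estimator $J_{DM\text{-}Semi}=\hat{\mathbb{E}}_{n'}[V^0_{Semi}]$ is consistent for $J$.
   Context: Setting: full features $X_{(1)}$ (finitely valued), label $Y$, missingness $R$ with mechanism $\pi_\beta$, $X_o$ always-observed coordinates; AFA policy $\pi_\alpha$ with acquire/stop actions, histories $\underline X^t=(X^0,\dots,X^t)$, $\underline A^t=(A^1,\dots,A^t)$; target $J=\mathbb{E}[C_{(\pi_\alpha)}]$ (expected misclassification cost under $\pi_\alpha$ and a fixed deterministic classifier). Semi-offline sampling distribution $p'$: $(X_{(1)},Y,R)\sim p$, actions from a blocked simulation policy $\pi'_{sim}(\cdot\mid\underline X'^{t-1},\underline A'^{t-1},R)$ that never acquires features with $R_i=0$ and otherwise has positive probability wherever the simulation policy $\pi_{sim}$ does ($\pi_{sim}$ satisfying off-policy positivity w.r.t. $\pi_\alpha$), revealed features $X'^t=X_{(1),A'^t}$, simulated cost $C'$. Semi-offline positivity: if a trajectory $(\underline x'^{T-1},\underline a'^T,x_o)$ has positive probability under $\pi_\alpha$ and the feature distribution, then $\pi_\beta(R\ge r'\mid x_o)>0$,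 with $r'$ the indicator of acquired features. The true semi-offline Q-function is $Q_{Semi}(\underline X'^{t-1},\underline A'^t,X_o)=\mathbb{E}_{p'}[C'_{(\overline\pi^{t+1}_\alpha)}\mid\underline X'^{t-1},\underline A'^t,X_o]$, where $C'_{(\overline\pi^{t+1}_\alpha)}$ is the potential outcome of $C'$ had actions from step $t+1$ onward followed $\pi_\alpha$. *)

theory Defs
  imports "HOL-Probability.Probability"
begin

text \<open>
  Features are indexed by a finite type 'f, feature values lie in a finite type 'v,
  labels in a finite type 'y.  Obs is the set of always-observed coordinates.
  A history is a list of steps (action, revealed value): an acquisition of feature i is
  recorded as (Some i, Some (x i)) (consistency / static features), the stop action as
  (None, None), after which the episode ends.
  A policy maps the initial observation X^0 = X_o (a partial map defined on Obs) and the
  history so far to a distribution over actions (Some i = acquire i, None = stop).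
\<close>

type_synonym ('f, 'v) hist = "('f option \<times> 'v option) list"
type_synonym ('f, 'v) policy = "('f \<Rightarrow> 'v option) \<Rightarrow> ('f, 'v) hist \<Rightarrow> 'f option pmf"

definition obs :: "'f set \<Rightarrow> ('f \<Rightarrow> 'v) \<Rightarrow> 'f \<Rightarrow> 'v option" where
  "obs Obs x = (\<lambda>i. if i \<in> Obs then Some (x i) else None)"

fun run :: "'f set \<Rightarrow> ('f, 'v) policy \<Rightarrow> ('f \<Rightarrow> 'v) \<Rightarrow> nat \<Rightarrow> ('f, 'v) hist \<Rightarrow> ('f, 'v) hist pmf" where
  "run Obs \<pi> x 0 h = return_pmf h"
| "run Obs \<pi> x (Suc n) h =
     bind_pmf (\<pi> (obs Obs x) h)
       (\<lambda>a. case a of None \<Rightarrow> return_pmf (h @ [(None, None)])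
                   | Some i \<Rightarrow> run Obs \<pi> x n (h @ [(Some i, Some (x i))]))"

definition acquired :: "('f, 'v) hist \<Rightarrow> 'f set" where
  "acquired \<tau> = {i. \<exists>v. (Some i, v) \<in> set \<tau>}"

text \<open>Target: expected cost J = E[C_(pi_alpha)], with (X,Y) ~ pXY and the cost
  C = Cost X_o (trajectory) Y (e.g. misclassification cost of a fixed deterministic
  classifier applied to the observed features, plus acquisition costs).\<close>
definition J_val ::
  "'f set \<Rightarrow> nat \<Rightarrow> (('f \<Rightarrow> 'v) \<times> 'y) pmf \<Rightarrow> ('f, 'v) policy
   \<Rightarrow> (('f \<Rightarrow> 'v option) \<Rightarrow> ('f, 'v) hist \<Rightarrow> 'y \<Rightarrow> real) \<Rightarrow> real" where
  "J_val Obs T pXY \<pi>\<^sub>\<alpha> Cost =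
     measure_pmf.expectation pXY
       (\<lambda>(x, y). measure_pmf.expectation (run Obs \<pi>\<^sub>\<alpha> x T []) (\<lambda>\<tau>. Cost (obs Obs x) \<tau> y))"

text \<open>Semi-offline sampling distribution p': (X,Y) ~ pXY, R ~ pi_beta(. | X) (no direct
  effect of Y on R), then a simulated trajectory from the blocked simulation policy,
  which may depend on R.\<close>
definition psemi ::
  "'f set \<Rightarrow> nat \<Rightarrow> (('f \<Rightarrow> 'v) \<times> 'y) pmf \<Rightarrow> (('f \<Rightarrow> 'v) \<Rightarrow> 'f set pmf)
   \<Rightarrow> ('f set \<Rightarrow> ('f, 'v) policy) \<Rightarrow> (('f \<Rightarrow> 'v) \<times> 'y \<times> 'f set \<times> ('f, 'v) hist) pmf" where
  "psemi Obs T pXY \<beta> \<pi>sim' =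
     bind_pmf pXY (\<lambda>(x, y). bind_pmf (\<beta> x) (\<lambda>r.
       map_pmf (\<lambda>\<tau>. (x, y, r, \<tau>)) (run Obs (\<pi>sim' r) x T [])))"

text \<open>Conditional mean of the potential outcome C'_(pi_alpha from step t+1) given the
  first t simulated steps ht = (X'^1..X'^t, A'^1..A'^t): if the t-th action was stop the
  episode is over, otherwise the trajectory is continued with pi_alpha (with fresh,
  independent policy randomisation) for the remaining T - t steps.\<close>
definition po_mean ::
  "'f set \<Rightarrow> nat \<Rightarrow> ('f, 'v) policy \<Rightarrow> (('f \<Rightarrow> 'v option) \<Rightarrow> ('f, 'v) hist \<Rightarrow> 'y \<Rightarrow> real)
   \<Rightarrow> ('f \<Rightarrow> 'v) \<Rightarrow> 'y \<Rightarrow> ('f, 'v) hist \<Rightarrow> real" where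
  "po_mean Obs T \<pi>\<^sub>\<alpha> Cost x y ht =
     (if ht \<noteq> [] \<and> fst (last ht) = None then Cost (obs Obs x) ht y
      else measure_pmf.expectation (run Obs \<pi>\<^sub>\<alpha> x (T - length ht) ht) (\<lambda>\<tau>. Cost (obs Obs x) \<tau> y))"

definition qevent ::
  "'f set \<Rightarrow> ('f, 'v) hist \<Rightarrow> 'f option \<Rightarrow> ('f \<Rightarrow> 'v option)
   \<Rightarrow> (('f \<Rightarrow> 'v) \<times> 'y \<times> 'f set \<times> ('f, 'v) hist) set" where
  "qevent Obs h a x0 = {(x, y, r, \<tau>). obs Obs x = x0 \<and> length h < length \<tau> \<and>
       take (length h) \<tau> = h \<and> fst (\<tau> ! length h) = a}"

text \<open>True semi-offline Q-function
  Q_Semi(h, a, x0) = E_{p'}[C'_(pi_alpha from t+1) | history h, A'^t = a, X_o = x0]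
  (set to 0 on conditioning events of p'-probability zero).\<close>
definition Q_semi ::
  "'f set \<Rightarrow> nat \<Rightarrow> (('f \<Rightarrow> 'v) \<times> 'y) pmf \<Rightarrow> (('f \<Rightarrow> 'v) \<Rightarrow> 'f set pmf)
   \<Rightarrow> ('f set \<Rightarrow> ('f, 'v) policy) \<Rightarrow> ('f, 'v) policy
   \<Rightarrow> (('f \<Rightarrow> 'v option) \<Rightarrow> ('f, 'v) hist \<Rightarrow> 'y \<Rightarrow> real)
   \<Rightarrow> ('f, 'v) hist \<Rightarrow> 'f option \<Rightarrow> ('f \<Rightarrow> 'v option) \<Rightarrow> real" where
  "Q_semi Obs T pXY \<beta> \<pi>sim' \<pi>\<^sub>\<alpha> Cost h a x0 =
     (let p' = psemi Obs T pXY \<beta> \<pi>sim'; E = qevent Obs h a x0 in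
      if set_pmf p' \<inter> E = {} then 0
      else measure_pmf.expectation (cond_pmf p' E)
             (\<lambda>(x, y, r, \<tau>). po_mean Obs T \<pi>\<^sub>\<alpha> Cost x y (take (Suc (length h)) \<tau>)))"

definition V0 :: "('f::finite, 'v) policy \<Rightarrow> (('f, 'v) hist \<Rightarrow> 'f option \<Rightarrow> ('f \<Rightarrow> 'v option) \<Rightarrow> real)
   \<Rightarrow> ('f \<Rightarrow> 'v option) \<Rightarrow> real" where
  "V0 \<pi>\<^sub>\<alpha> Qm x0 = (\<Sum>a\<in>UNIV. Qm [] a x0 * pmf (\<pi>\<^sub>\<alpha> x0 []) a)"

end

theory Submission
  imports Defs
begin

lemma exp_const_on_support:
  fixes f :: "'a \<Rightarrow> real"
  assumes "\<And>x. x \<in> set_pmf p \<Longrightarrow> f x = c"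
  shows "measure_pmf.expectation p f = c"
proof -
  have "measure_pmf.expectation p f = measure_pmf.expectation p (\<lambda>_. c)"
    using assms by (intro integral_cong_AE) (auto simp: AE_measure_pmf_iff)
  then show ?thesis by simp
qed

lemma integral_return_pmf_real:
  fixes f :: "'a \<Rightarrow> real"
  shows "measure_pmf.expectation (return_pmf v) f = f v"
  by (rule exp_const_on_support) auto

lemma finite_set_bind_pmf:
  assumes "finite (set_pmf M)" "\<And>x. x \<in> set_pmf M \<Longrightarrow> finite (set_pmf (N x))"
  shows "finite (set_pmf (bind_pmf M N))"
  using assms by (simp add: set_bind_pmf)

lemma integral_bind_pmf_fin:
  fixes f :: "'b \<Rightarrow> real"
  assumes fM: "finite (set_pmf M)" and fN: "\<And>x. x \<in> set_pmf M \<Longrightarrow> finite (set_pmf (N x))"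
  shows "measure_pmf.expectation (bind_pmf M N) f
       = measure_pmf.expectation M (\<lambda>x. measure_pmf.expectation (N x) f)"
proof -
  define A where "A = set_pmf M"
  define B where "B = set_pmf (bind_pmf M N)"
  have fA: "finite A" using fM A_def by simp
  have fB: "finite B" unfolding B_def by (rule finite_set_bind_pmf[OF fM fN])
  have NB: "\<And>x. x \<in> A \<Longrightarrow> set_pmf (N x) \<subseteq> B" unfolding A_def B_def by (auto simp: set_bind_pmf)
  have "measure_pmf.expectation (bind_pmf M N) f = (\<Sum>z\<in>B. f z * pmf (bind_pmf M N) z)"
    using fB by (intro integral_measure_pmf_real) (auto simp: B_def)
  also have "\<dots> = (\<Sum>z\<in>B. f z * (\<Sum>x\<in>A. pmf (N x) z * pmf M x))"
  proof (intro sum.cong refl)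
    fix z show "f z * pmf (bind_pmf M N) z = f z * (\<Sum>x\<in>A. pmf (N x) z * pmf M x)"
      unfolding pmf_bind using fA by (subst integral_measure_pmf_real[of A]) (auto simp: A_def)
  qed
  also have "\<dots> = (\<Sum>x\<in>A. (\<Sum>z\<in>B. f z * pmf (N x) z) * pmf M x)"
    by (simp add: sum_distrib_left sum_distrib_right mult_ac sum.swap[of _ B])
  also have "\<dots> = (\<Sum>x\<in>A. measure_pmf.expectation (N x) f * pmf M x)"
  proof (intro sum.cong refl)
    fix x assume x: "x \<in> A"
    show "(\<Sum>z\<in>B. f z * pmf (N x) z) * pmf M x = measure_pmf.expectation (N x) f * pmf M x"
      using NB[OF x] fB by (subst integral_measure_pmf_real[of B]) auto
  qed
  also have "\<dots> = measure_pmf.expectation M (\<lambda>x. measure_pmf.expectation (N x) f)"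
    using fA by (subst integral_measure_pmf_real[of A]) (auto simp: A_def)
  finally show ?thesis .
qed

lemma run_finite: "finite (set_pmf (run Obs (\<pi>::('f::finite,'v) policy) x n h))"
proof (induction n arbitrary: h)
  case 0 then show ?case by simp
next
  case (Suc n)
  show ?case
    unfolding run.simps set_bind_pmf
    by (rule finite_UN_I) (auto split: option.splits intro: Suc)
qed

lemma run_prefix: "\<tau> \<in> set_pmf (run Obs \<pi> x n h) \<Longrightarrow> \<exists>ys. \<tau> = h @ ys"
proof (induction n arbitrary: h)
  case 0 then show ?case by simp
next
  case (Suc n)
  then show ?case
    by (auto simp: set_bind_pmf split: option.splits) (metis Suc.IH append_assoc)+
qed

lemma run_first:
  fixes \<phi> :: "('f::finite, 'v) hist \<Rightarrow> real"
  shows "measure_pmf.expectation (run Obs \<pi> x (Suc n) [])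
          (\<lambda>\<tau>. if 0 < length \<tau> \<and> fst (\<tau> ! 0) = a then \<phi> (take 1 \<tau>) else 0)
       = pmf (\<pi> (obs Obs x) []) a * \<phi> [(a, map_option x a)]"
proof -
  let ?g = "\<lambda>\<tau>. if 0 < length \<tau> \<and> fst (\<tau> ! 0) = a then \<phi> (take 1 \<tau>) else 0"
  let ?N = "\<lambda>a'. case a' of None \<Rightarrow> return_pmf ([] @ [(None, None)])
                   | Some i \<Rightarrow> run Obs \<pi> x n ([] @ [(Some i, Some (x i))])"
  have "measure_pmf.expectation (run Obs \<pi> x (Suc n) []) ?g
      = measure_pmf.expectation (\<pi> (obs Obs x) []) (\<lambda>a'. measure_pmf.expectation (?N a') ?g)"
    by (subst run.simps(2), rule integral_bind_pmf_fin)
       (auto intro: run_finite split: option.splits)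
  also have "\<dots> = measure_pmf.expectation (\<pi> (obs Obs x) []) (\<lambda>a'. if a' = a then \<phi> [(a, map_option x a)] else 0)"
  proof (intro Bochner_Integration.integral_cong refl)
    fix a' show "measure_pmf.expectation (?N a') ?g = (if a' = a then \<phi> [(a, map_option x a)] else 0)"
    proof (cases a')
      case None then show ?thesis by (intro exp_const_on_support) auto
    next
      case (Some i)
      show ?thesis using Some
        by (intro exp_const_on_support) (auto dest!: run_prefix)
    qed
  qed
  also have "\<dots> = pmf (\<pi> (obs Obs x) []) a * \<phi> [(a, map_option x a)]"
    proof -
    have "\<And>aa. (if aa = a then \<phi> [(a, map_option x a)] else 0) * pmf (\<pi> (obs Obs x) []) aa
        = (if aa = a then pmf (\<pi> (obs Obs x) []) a * \<phi> [(a, map_option x a)] else 0)" by auto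
    then show ?thesis by (subst integral_measure_pmf_real[of UNIV]) auto
  qed
  finally show ?thesis .
qed


lemma psemi_expect:
  fixes H :: "('f::finite \<Rightarrow> 'v::finite) \<times> 'y::finite \<times> 'f set \<times> ('f, 'v) hist \<Rightarrow> real"
  shows "measure_pmf.expectation (psemi Obs T pXY \<beta> \<pi>sim') H
    = measure_pmf.expectation pXY (\<lambda>(x, y). measure_pmf.expectation (\<beta> x) (\<lambda>r.
         measure_pmf.expectation (run Obs (\<pi>sim' r) x T []) (\<lambda>\<tau>. H (x, y, r, \<tau>))))"
  unfolding psemi_def
proof (subst integral_bind_pmf_fin)
  show "finite (set_pmf pXY)" by simp
  show "\<And>z. z \<in> set_pmf pXY \<Longrightarrow> finite (set_pmf (case z of (x, y) \<Rightarrow> bind_pmf (\<beta> x)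
             (\<lambda>r. map_pmf (\<lambda>\<tau>. (x, y, r, \<tau>)) (run Obs (\<pi>sim' r) x T []))))"
    by (auto intro!: finite_set_bind_pmf run_finite)
  show "measure_pmf.expectation pXY (\<lambda>z. measure_pmf.expectation (case z of (x, y) \<Rightarrow> bind_pmf (\<beta> x)
             (\<lambda>r. map_pmf (\<lambda>\<tau>. (x, y, r, \<tau>)) (run Obs (\<pi>sim' r) x T []))) H) =
    measure_pmf.expectation pXY (\<lambda>(x, y). measure_pmf.expectation (\<beta> x) (\<lambda>r.
         measure_pmf.expectation (run Obs (\<pi>sim' r) x T []) (\<lambda>\<tau>. H (x, y, r, \<tau>))))"
  proof (intro Bochner_Integration.integral_cong refl)
    fix z :: "('f \<Rightarrow> 'v) \<times> 'y"
    obtain x y where z: "z = (x, y)" by (cases z)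
    show "measure_pmf.expectation (case z of (x, y) \<Rightarrow> bind_pmf (\<beta> x)
             (\<lambda>r. map_pmf (\<lambda>\<tau>. (x, y, r, \<tau>)) (run Obs (\<pi>sim' r) x T []))) H =
      (case z of (x, y) \<Rightarrow> measure_pmf.expectation (\<beta> x) (\<lambda>r.
         measure_pmf.expectation (run Obs (\<pi>sim' r) x T []) (\<lambda>\<tau>. H (x, y, r, \<tau>))))"
      unfolding z by (simp, subst integral_bind_pmf_fin) (auto intro: run_finite)
  qed
qed

lemma cond_expect:
  fixes g :: "'a \<Rightarrow> real"
  assumes f: "finite (set_pmf p)" and ne: "set_pmf p \<inter> s \<noteq> {}"
  shows "measure_pmf.expectation (cond_pmf p s) g
       = measure_pmf.expectation p (\<lambda>z. indicator s z * g z) / measure_pmf.prob p s"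
proof -
  have "measure_pmf.expectation (cond_pmf p s) g = (\<Sum>z\<in>set_pmf p. g z * pmf (cond_pmf p s) z)"
    using f ne by (intro integral_measure_pmf_real) auto
  also have "\<dots> = (\<Sum>z\<in>set_pmf p. (indicator s z * g z) * pmf p z) / measure_pmf.prob p s"
    unfolding sum_divide_distrib using ne by (intro sum.cong refl) (auto simp: pmf_cond indicator_def)
  also have "\<dots> = measure_pmf.expectation p (\<lambda>z. indicator s z * g z) / measure_pmf.prob p s"
    using f by (subst integral_measure_pmf_real[of "set_pmf p"]) auto
  finally show ?thesis .
qed

lemma psemi_finite:
  "finite (set_pmf (psemi Obs T (pXY :: (('f::finite \<Rightarrow> 'v::finite) \<times> 'y::finite) pmf) \<beta> \<pi>sim'))"
  unfolding psemi_def by (auto intro!: finite_set_bind_pmf run_finite)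

lemma Q_semi_eq:
  "Q_semi Obs T (pXY :: (('f::finite \<Rightarrow> 'v::finite) \<times> 'y::finite) pmf) \<beta> \<pi>sim' \<pi>\<^sub>\<alpha> Cost h a x0
   = measure_pmf.expectation (psemi Obs T pXY \<beta> \<pi>sim')
        (\<lambda>z. indicator (qevent Obs h a x0) z *
              (case z of (x, y, r, \<tau>) \<Rightarrow> po_mean Obs T \<pi>\<^sub>\<alpha> Cost x y (take (Suc (length h)) \<tau>)))
     / measure_pmf.expectation (psemi Obs T pXY \<beta> \<pi>sim') (indicator (qevent Obs h a x0))"
proof (cases "set_pmf (psemi Obs T pXY \<beta> \<pi>sim') \<inter> qevent Obs h a x0 = {}")
  case True
  then have "measure_pmf.prob (psemi Obs T pXY \<beta> \<pi>sim') (qevent Obs h a x0) = 0"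
    by (simp add: measure_pmf_zero_iff)
  then show ?thesis using True unfolding Q_semi_def by (simp add: Let_def)
next
  case False
  then show ?thesis unfolding Q_semi_def Let_def
    by (simp add: cond_expect[OF psemi_finite] split_beta')
qed

lemma event_expect:
  fixes w :: "('f::finite \<Rightarrow> 'v::finite) \<Rightarrow> 'y::finite \<Rightarrow> ('f, 'v) hist \<Rightarrow> real"
  assumes T: "T = Suc n"
  shows "measure_pmf.expectation (psemi Obs T pXY \<beta> \<pi>sim')
           (\<lambda>z. indicator (qevent Obs [] a x0) z * (case z of (x, y, r, \<tau>) \<Rightarrow> w x y (take 1 \<tau>)))
   = measure_pmf.expectation pXY (\<lambda>(x, y). (if obs Obs x = x0 then 1 else 0)
         * measure_pmf.expectation (\<beta> x) (\<lambda>r. pmf (\<pi>sim' r (obs Obs x) []) a)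
         * w x y [(a, map_option x a)])"
  unfolding psemi_expect
proof (intro Bochner_Integration.integral_cong refl)
  fix z :: "('f \<Rightarrow> 'v) \<times> 'y"
  obtain x y where z: "z = (x, y)" by (cases z)
  define \<phi> where "\<phi> = (\<lambda>ht. (if obs Obs x = x0 then 1 else 0) * w x y ht)"
  have eq: "\<And>r. measure_pmf.expectation (run Obs (\<pi>sim' r) x T [])
       (\<lambda>\<tau>. indicator (qevent Obs [] a x0) (x, y, r, \<tau>) * (case (x, y, r, \<tau>) of (x, y, r, \<tau>) \<Rightarrow> w x y (take 1 \<tau>)))
     = pmf (\<pi>sim' r (obs Obs x) []) a * \<phi> [(a, map_option x a)]"
  proof -
    fix r
    have "(\<lambda>\<tau>. indicator (qevent Obs [] a x0) (x, y, r, \<tau>) * (case (x, y, r, \<tau>) of (x, y, r, \<tau>) \<Rightarrow> w x y (take 1 \<tau>)))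
        = (\<lambda>\<tau>. if 0 < length \<tau> \<and> fst (\<tau> ! 0) = a then \<phi> (take 1 \<tau>) else 0)"
      by (auto simp: qevent_def indicator_def \<phi>_def)
    then show "?thesis r" unfolding T by (simp only: run_first)
  qed
  show "(case z of (x, y) \<Rightarrow> measure_pmf.expectation (\<beta> x) (\<lambda>r. measure_pmf.expectation (run Obs (\<pi>sim' r) x T [])
       (\<lambda>\<tau>. indicator (qevent Obs [] a x0) (x, y, r, \<tau>) * (case (x, y, r, \<tau>) of (x, y, r, \<tau>) \<Rightarrow> w x y (take 1 \<tau>))))) =
    (case z of (x, y) \<Rightarrow> (if obs Obs x = x0 then 1 else 0)
         * measure_pmf.expectation (\<beta> x) (\<lambda>r. pmf (\<pi>sim' r (obs Obs x) []) a)
         * w x y [(a, map_option x a)])"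
    unfolding z using eq by (simp add: \<phi>_def mult_ac)
qed

lemma J_inner:
  fixes Cost :: "('f::finite \<Rightarrow> 'v option) \<Rightarrow> ('f, 'v) hist \<Rightarrow> 'y \<Rightarrow> real"
  assumes T: "T = Suc n"
  shows "measure_pmf.expectation (run Obs \<pi>\<^sub>\<alpha> x T []) (\<lambda>\<tau>. Cost (obs Obs x) \<tau> y)
     = (\<Sum>a\<in>UNIV. pmf (\<pi>\<^sub>\<alpha> (obs Obs x) []) a * po_mean Obs T \<pi>\<^sub>\<alpha> Cost x y [(a, map_option x a)])"
proof -
  let ?N = "\<lambda>a'. case a' of None \<Rightarrow> return_pmf ([] @ [(None, None)])
                   | Some i \<Rightarrow> run Obs \<pi>\<^sub>\<alpha> x n ([] @ [(Some i, Some (x i))])"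
  have "measure_pmf.expectation (run Obs \<pi>\<^sub>\<alpha> x T []) (\<lambda>\<tau>. Cost (obs Obs x) \<tau> y)
     = measure_pmf.expectation (\<pi>\<^sub>\<alpha> (obs Obs x) []) (\<lambda>a'. measure_pmf.expectation (?N a') (\<lambda>\<tau>. Cost (obs Obs x) \<tau> y))"
    unfolding T by (subst run.simps(2), rule integral_bind_pmf_fin)
       (auto intro: run_finite split: option.splits)
  also have "\<dots> = (\<Sum>a\<in>UNIV. measure_pmf.expectation (?N a) (\<lambda>\<tau>. Cost (obs Obs x) \<tau> y) * pmf (\<pi>\<^sub>\<alpha> (obs Obs x) []) a)"
    by (subst integral_measure_pmf_real[of UNIV]) auto
  also have "\<dots> = (\<Sum>a\<in>UNIV. pmf (\<pi>\<^sub>\<alpha> (obs Obs x) []) a * po_mean Obs T \<pi>\<^sub>\<alpha> Cost x y [(a, map_option x a)])"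
  proof (intro sum.cong refl)
    fix a :: "'f option"
    show "measure_pmf.expectation (?N a) (\<lambda>\<tau>. Cost (obs Obs x) \<tau> y) * pmf (\<pi>\<^sub>\<alpha> (obs Obs x) []) a =
        pmf (\<pi>\<^sub>\<alpha> (obs Obs x) []) a * po_mean Obs T \<pi>\<^sub>\<alpha> Cost x y [(a, map_option x a)]"
      by (cases a) (auto simp: po_mean_def T integral_return_pmf_real)
  qed
  finally show ?thesis .
qed

lemma tower:
  fixes p :: "'z::finite \<Rightarrow> real" and ob :: "'z \<Rightarrow> 'ob" and u :: "'ob \<Rightarrow> real" and G :: "'z \<Rightarrow> real"
  assumes nn: "\<And>z. p z \<ge> 0"
  shows "(\<Sum>z\<in>UNIV. p z * (u (ob z) * ((\<Sum>z'\<in>UNIV. p z' * (if ob z' = ob z then 1 else 0) * G z')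
              / (\<Sum>z'\<in>UNIV. p z' * (if ob z' = ob z then 1 else 0)))))
       = (\<Sum>z\<in>UNIV. p z * (u (ob z) * G z))"
proof -
  define P where "P w = (\<Sum>z'\<in>UNIV. p z' * (if ob z' = w then 1 else 0))" for w
  have "(\<Sum>z\<in>UNIV. p z * (u (ob z) * ((\<Sum>z'\<in>UNIV. p z' * (if ob z' = ob z then 1 else 0) * G z') / P (ob z))))
      = (\<Sum>z\<in>UNIV. \<Sum>z'\<in>UNIV. p z * (if ob z = ob z' then 1 else 0) * (u (ob z') * p z' * G z' / P (ob z')))"
    by (intro sum.cong refl) (auto simp: sum_distrib_left sum_divide_distrib intro!: sum.cong)
  also have "\<dots> = (\<Sum>z'\<in>UNIV. \<Sum>z\<in>UNIV. p z * (if ob z = ob z' then 1 else 0) * (u (ob z') * p z' * G z' / P (ob z')))"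
    by (rule sum.swap)
  also have "\<dots> = (\<Sum>z'\<in>UNIV. P (ob z') * (u (ob z') * p z' * G z' / P (ob z')))"
    by (intro sum.cong refl) (simp only: P_def sum_distrib_right)
  also have "\<dots> = (\<Sum>z\<in>UNIV. p z * (u (ob z) * G z))"
  proof (intro sum.cong refl)
    fix z'
    have "p z' = p z' * (if ob z' = ob z' then 1 else 0)" by simp
    also have "\<dots> \<le> P (ob z')" unfolding P_def
      by (rule member_le_sum[of z' UNIV "\<lambda>z. p z * (if ob z = ob z' then 1 else 0)"]) (auto intro: nn)
    finally have le: "p z' \<le> P (ob z')" .
    show "P (ob z') * (u (ob z') * p z' * G z' / P (ob z')) = p z' * (u (ob z') * G z')"
    proof (cases "P (ob z') = 0")
      case True then have "p z' = 0" using le nn[of z'] by linarith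
      then show ?thesis using True by simp
    next
      case False then show ?thesis by simp
    qed
  qed
  finally show ?thesis unfolding P_def .
qed


lemma wlln_pmf:
  fixes F :: "'a \<Rightarrow> real" and S :: "nat \<Rightarrow> 's \<Rightarrow> 'a" and p :: "'a pmf" and M :: "'s measure"
  assumes M_prob: "prob_space M"
    and S_meas: "\<And>i. S i \<in> measurable M (measure_pmf p)"
    and S_dist: "\<And>i. distr M (measure_pmf p) (S i) = measure_pmf p"
    and S_indep: "prob_space.indep_vars M (\<lambda>_. measure_pmf p) S UNIV"
    and bnd: "\<And>s. \<bar>F s\<bar> \<le> B"
    and \<epsilon>: "\<epsilon> > 0"
  shows "(\<lambda>n. measure M {\<omega> \<in> space M. \<bar>(\<Sum>i<n. F (S i \<omega>)) / real n - measure_pmf.expectation p F\<bar> > \<epsilon>})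
           \<longlonglongrightarrow> 0"
proof -
  interpret prob_space M by (rule M_prob)
  define a where "a = - B - 1"
  define b where "b = B + 1"
  have B0: "B \<ge> 0" using bnd[of undefined] by linarith
  have ab: "a < b" unfolding a_def b_def using B0 by simp
  have Fm: "F \<in> borel_measurable (measure_pmf p)" by simp
  have rv: "\<And>i. random_variable borel (\<lambda>\<omega>. F (S i \<omega>))"
    using measurable_comp[OF S_meas Fm] by (simp add: comp_def)
  note [measurable] = rv
  have distrF: "\<And>i. distr M borel (\<lambda>\<omega>. F (S i \<omega>)) = distr (measure_pmf p) borel F"
  proof -
    fix i
    have "distr M borel (\<lambda>\<omega>. F (S i \<omega>)) = distr (distr M (measure_pmf p) (S i)) borel F"
      using distr_distr[OF Fm S_meas[of i]] by (simp add: comp_def)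
    then show "distr M borel (\<lambda>\<omega>. F (S i \<omega>)) = distr (measure_pmf p) borel F" by (simp add: S_dist)
  qed
  have indepF: "indep_vars (\<lambda>_. borel) (\<lambda>i \<omega>. F (S i \<omega>)) UNIV"
    using indep_vars_compose2[OF S_indep, of "\<lambda>_. F" "\<lambda>_. borel"] by simp
  have mu: "expectation (\<lambda>\<omega>. F (S 0 \<omega>)) = measure_pmf.expectation p F"
  proof -
    have "expectation (\<lambda>\<omega>. F (S 0 \<omega>)) = integral\<^sup>L (distr M (measure_pmf p) (S 0)) F"
      by (rule integral_distr[OF S_meas Fm, symmetric])
    then show ?thesis by (simp add: S_dist)
  qed
  have bound: "measure M {\<omega> \<in> space M. \<bar>(\<Sum>i<n. F (S i \<omega>)) / real n - measure_pmf.expectation p F\<bar> > \<epsilon>}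
      \<le> 2 * exp (- 2 * real n * \<epsilon>\<^sup>2 / (b - a)\<^sup>2)" if n: "n > 0" for n
  proof -
    interpret H: Hoeffding_ineq_iid M "{..<n}" "\<lambda>i \<omega>. F (S i \<omega>)" "\<lambda>\<omega>. F (S 0 \<omega>)" a b "expectation (\<lambda>\<omega>. F (S 0 \<omega>))"
    proof unfold_locales
      show "finite {..<n}" by simp
      show "indep_vars (\<lambda>_. borel) (\<lambda>i \<omega>. F (S i \<omega>)) {..<n}"
        by (rule indep_vars_subset[OF indepF]) auto
      show "\<And>i. i \<in> {..<n} \<Longrightarrow> distr M borel (\<lambda>\<omega>. F (S i \<omega>)) = distr M borel (\<lambda>\<omega>. F (S 0 \<omega>))"
        by (simp add: distrF)
      show "random_variable borel (\<lambda>\<omega>. F (S 0 \<omega>))" by (rule rv)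
      show "AE x in M. F (S 0 x) \<in> {a..b}"
      proof (intro AE_I2)
        fix x show "F (S 0 x) \<in> {a..b}" using bnd[of "S 0 x"] by (auto simp: a_def b_def abs_le_iff)
      qed
    qed simp
    have "measure M {\<omega> \<in> space M. \<bar>(\<Sum>i<n. F (S i \<omega>)) / real n - measure_pmf.expectation p F\<bar> > \<epsilon>}
       \<le> measure M {\<omega> \<in> space M. \<bar>(\<Sum>i\<in>{..<n}. F (S i \<omega>)) / real (card {..<n}) - expectation (\<lambda>\<omega>. F (S 0 \<omega>))\<bar> \<ge> \<epsilon>}"
      unfolding mu card_lessThan
    proof (rule finite_measure_mono)
      show "{\<omega> \<in> space M. \<epsilon> \<le> \<bar>(\<Sum>i<n. F (S i \<omega>)) / real n - measure_pmf.expectation p F\<bar>} \<in> events"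
        by measurable
    qed (rule Collect_mono, blast intro: less_imp_le)
    also have "\<dots> \<le> 2 * exp (- 2 * real (card {..<n}) * \<epsilon>\<^sup>2 / (b - a)\<^sup>2)"
      by (rule H.Hoeffding_ineq_abs_ge') (use \<epsilon> ab n in auto)
    finally show ?thesis by simp
  qed
  have lim: "(\<lambda>n. 2 * exp (- 2 * real n * \<epsilon>\<^sup>2 / (b - a)\<^sup>2)) \<longlonglongrightarrow> 0"
  proof -
    define c where "c = 2 * \<epsilon>\<^sup>2 / (b - a)\<^sup>2"
    have c: "c > 0" unfolding c_def using \<epsilon> ab by simp
    have "(\<lambda>n. exp (- c) ^ n) \<longlonglongrightarrow> 0"
      by (rule LIMSEQ_power_zero) (use c in simp)
    moreover have "\<And>n. exp (- c) ^ n = exp (- 2 * real n * \<epsilon>\<^sup>2 / (b - a)\<^sup>2)"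
    proof -
      fix n :: nat
      have "exp (- c) ^ n = exp (real n * (- c))" by (rule exp_of_nat_mult[symmetric])
      also have "real n * (- c) = - 2 * real n * \<epsilon>\<^sup>2 / (b - a)\<^sup>2" unfolding c_def by simp
      finally show "exp (- c) ^ n = exp (- 2 * real n * \<epsilon>\<^sup>2 / (b - a)\<^sup>2)" .
    qed
    ultimately have "(\<lambda>n. exp (- 2 * real n * \<epsilon>\<^sup>2 / (b - a)\<^sup>2)) \<longlonglongrightarrow> 0" by simp
    then show ?thesis using tendsto_mult_right_zero by blast
  qed
  show ?thesis
  proof (rule tendsto_sandwich[OF _ _ tendsto_const lim])
    show "\<forall>\<^sub>F n in sequentially. 0 \<le> measure M {\<omega> \<in> space M. \<bar>(\<Sum>i<n. F (S i \<omega>)) / real n - measure_pmf.expectation p F\<bar> > \<epsilon>}"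
      by simp
    show "\<forall>\<^sub>F n in sequentially. measure M {\<omega> \<in> space M. \<bar>(\<Sum>i<n. F (S i \<omega>)) / real n - measure_pmf.expectation p F\<bar> > \<epsilon>}
        \<le> 2 * exp (- 2 * real n * \<epsilon>\<^sup>2 / (b - a)\<^sup>2)"
      using eventually_gt_at_top[of 0] by eventually_elim (rule bound)
  qed
qed

theorem theorem6:
  fixes Obs :: "'f::finite set"
    and T :: nat
    and pXY :: "(('f \<Rightarrow> 'v::finite) \<times> 'y::finite) pmf"
    and \<beta> :: "('f \<Rightarrow> 'v) \<Rightarrow> 'f set pmf"
    and \<pi>\<^sub>\<alpha> \<pi>sim :: "('f, 'v) policy"
    and \<pi>sim' :: "'f set \<Rightarrow> ('f, 'v) policy"
    and Cost :: "('f \<Rightarrow> 'v option) \<Rightarrow> ('f, 'v) hist \<Rightarrow> 'y \<Rightarrow> real"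
    and Qm :: "('f, 'v) hist \<Rightarrow> 'f option \<Rightarrow> ('f \<Rightarrow> 'v option) \<Rightarrow> real"
    and M :: "'s measure"
    and S :: "nat \<Rightarrow> 's \<Rightarrow> ('f \<Rightarrow> 'v) \<times> 'y \<times> 'f set \<times> ('f, 'v) hist"
  assumes horizon: "0 < T"
    and MAR: "\<And>x x'. obs Obs x = obs Obs x' \<Longrightarrow> \<beta> x = \<beta> x'"
    and always_observed: "\<And>x r. r \<in> set_pmf (\<beta> x) \<Longrightarrow> Obs \<subseteq> r"
    and blocked: "\<And>r x0 h i. Some i \<in> set_pmf (\<pi>sim' r x0 h) \<Longrightarrow> i \<in> r"
    and blocked_pos: "\<And>r x0 h a. a \<in> set_pmf (\<pi>sim x0 h) \<Longrightarrow> (\<forall>i. a = Some i \<longrightarrow> i \<in> r)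
                         \<Longrightarrow> a \<in> set_pmf (\<pi>sim' r x0 h)"
    and offpolicy_pos: "\<And>x0 h a. a \<in> set_pmf (\<pi>\<^sub>\<alpha> x0 h) \<Longrightarrow> a \<in> set_pmf (\<pi>sim x0 h)"
    and semioffline_pos: "\<And>x y \<tau>. (x, y) \<in> set_pmf pXY \<Longrightarrow> \<tau> \<in> set_pmf (run Obs \<pi>\<^sub>\<alpha> x T [])
                         \<Longrightarrow> measure_pmf.prob (\<beta> x) {r. acquired \<tau> \<subseteq> r} > 0"
    and Q_correct: "\<And>h a x0. Qm h a x0 = Q_semi Obs T pXY \<beta> \<pi>sim' \<pi>\<^sub>\<alpha> Cost h a x0"
    and M_prob: "prob_space M"
    and S_meas: "\<And>i. S i \<in> measurable M (measure_pmf (psemi Obs T pXY \<beta> \<pi>sim'))"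
    and S_dist: "\<And>i. distr M (measure_pmf (psemi Obs T pXY \<beta> \<pi>sim')) (S i)
                       = measure_pmf (psemi Obs T pXY \<beta> \<pi>sim')"
    and S_indep: "prob_space.indep_vars M (\<lambda>_. measure_pmf (psemi Obs T pXY \<beta> \<pi>sim')) S UNIV"
  shows "measure_pmf.expectation (psemi Obs T pXY \<beta> \<pi>sim')
            (\<lambda>(x, y, r, \<tau>). V0 \<pi>\<^sub>\<alpha> Qm (obs Obs x)) = J_val Obs T pXY \<pi>\<^sub>\<alpha> Cost
         \<and> (\<forall>\<epsilon>>0. (\<lambda>n. measure M {\<omega> \<in> space M.
               \<bar>(\<Sum>i<n. V0 \<pi>\<^sub>\<alpha> Qm (obs Obs (fst (S i \<omega>)))) / real n - J_val Obs T pXY \<pi>\<^sub>\<alpha> Cost\<bar> > \<epsilon>})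
             \<longlonglongrightarrow> 0)"
proof -
  define p' where "p' = psemi Obs T pXY \<beta> \<pi>sim'"
  obtain n where T: "T = Suc n" using horizon by (cases T) auto
  define c where "c x a = measure_pmf.expectation (\<beta> x) (\<lambda>r. pmf (\<pi>sim' r (obs Obs x) []) a)" for x a
  define G where "G x y a = po_mean Obs T \<pi>\<^sub>\<alpha> Cost x y [(a, map_option x a)]" for x y a
  define ob where "ob z = obs Obs (fst z)" for z :: "('f \<Rightarrow> 'v) \<times> 'y"
  define P where "P w = (\<Sum>z\<in>UNIV. pmf pXY z * (if ob z = w then 1 else 0))" for w
  define Sa where "Sa a w = (\<Sum>z\<in>UNIV. pmf pXY z * (if ob z = w then 1 else 0) * G (fst z) (snd z) a)" for a w
  have cc: "c x a = c x' a" if "obs Obs x = obs Obs x'" for x x' a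
    unfolding c_def using MAR[OF that] that by simp
  have Qform: "Qm [] a x0 =
      measure_pmf.expectation pXY (\<lambda>(x, y). (if obs Obs x = x0 then 1 else 0) * c x a * G x y a)
    / measure_pmf.expectation pXY (\<lambda>(x, y). (if obs Obs x = x0 then 1 else 0) * c x a * 1)" for a x0
  proof -
    note ev1 = event_expect[OF T, of Obs pXY \<beta> \<pi>sim' a x0 "\<lambda>x y ht. po_mean Obs T \<pi>\<^sub>\<alpha> Cost x y ht"]
    note ev2 = event_expect[OF T, of Obs pXY \<beta> \<pi>sim' a x0 "\<lambda>x y ht. 1"]
    have n1: "measure_pmf.expectation (psemi Obs T pXY \<beta> \<pi>sim') (\<lambda>z. indicator (qevent Obs [] a x0) z *
              (case z of (x, y, r, \<tau>) \<Rightarrow> po_mean Obs T \<pi>\<^sub>\<alpha> Cost x y (take (Suc (length ([]::('f,'v) hist))) \<tau>)))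
       = measure_pmf.expectation pXY (\<lambda>(x, y). (if obs Obs x = x0 then 1 else 0) * c x a * G x y a)"
      using ev1 by (simp add: c_def G_def)
    have d1: "measure_pmf.expectation (psemi Obs T pXY \<beta> \<pi>sim') (indicator (qevent Obs [] a x0))
       = measure_pmf.expectation pXY (\<lambda>(x, y). (if obs Obs x = x0 then 1 else 0) * c x a * 1)"
    proof -
      have eqf: "indicator (qevent Obs [] a x0) = (\<lambda>z. indicator (qevent Obs [] a x0) z *
              (case z of (x, y, r, \<tau>) \<Rightarrow> (\<lambda>x y (ht::('f,'v) hist). 1::real) x y (take 1 \<tau>)))"
        by (simp add: split_beta)
      have "measure_pmf.expectation (psemi Obs T pXY \<beta> \<pi>sim') (indicator (qevent Obs [] a x0))
          = measure_pmf.expectation (psemi Obs T pXY \<beta> \<pi>sim') (\<lambda>z. indicator (qevent Obs [] a x0) z *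
              (case z of (x, y, r, \<tau>) \<Rightarrow> (\<lambda>x y (ht::('f,'v) hist). 1::real) x y (take 1 \<tau>)))"
        by (rule arg_cong[OF eqf])
      also note ev2
      finally show ?thesis unfolding c_def .
    qed
    show ?thesis unfolding Q_correct Q_semi_eq n1 d1 ..
  qed
  have sum_form: "measure_pmf.expectation pXY (\<lambda>(x, y). (if obs Obs x = obs Obs x0 then 1 else 0) * c x a * g x y)
      = c x0 a * (\<Sum>z\<in>UNIV. pmf pXY z * (if ob z = obs Obs x0 then 1 else 0) * g (fst z) (snd z))" for x0 a g
  proof -
    have "measure_pmf.expectation pXY (\<lambda>(x, y). (if obs Obs x = obs Obs x0 then 1 else 0) * c x a * g x y)
        = (\<Sum>z\<in>UNIV. (case z of (x, y) \<Rightarrow> (if obs Obs x = obs Obs x0 then 1 else 0) * c x a * g x y) * pmf pXY z)"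
      by (subst integral_measure_pmf_real[of UNIV]) auto
    also have "\<dots> = (\<Sum>z\<in>UNIV. c x0 a * (pmf pXY z * (if ob z = obs Obs x0 then 1 else 0) * g (fst z) (snd z)))"
      by (intro sum.cong refl) (auto simp: ob_def split_beta intro: cc)
    finally show ?thesis by (simp add: sum_distrib_left)
  qed
  have cpos: "c x a > 0" if xy: "(x, y) \<in> set_pmf pXY" and pa: "pmf (\<pi>\<^sub>\<alpha> (obs Obs x) []) a > 0" for x y a
  proof -
    have aa: "a \<in> set_pmf (\<pi>\<^sub>\<alpha> (obs Obs x) [])" using pa by (simp add: set_pmf_iff)
    have "\<exists>r. r \<in> set_pmf (\<beta> x) \<and> a \<in> set_pmf (\<pi>sim' r (obs Obs x) [])"
    proof (cases a)
      case None
      obtain r where r: "r \<in> set_pmf (\<beta> x)" using set_pmf_not_empty by fast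
      have "a \<in> set_pmf (\<pi>sim' r (obs Obs x) [])"
        by (rule blocked_pos[OF offpolicy_pos[OF aa]]) (simp add: None)
      then show ?thesis using r by blast
    next
      case (Some i)
      obtain \<tau>0 where t0: "\<tau>0 \<in> set_pmf (run Obs \<pi>\<^sub>\<alpha> x n ([] @ [(Some i, Some (x i))]))"
        using set_pmf_not_empty by fast
      have tT: "\<tau>0 \<in> set_pmf (run Obs \<pi>\<^sub>\<alpha> x T [])"
        unfolding T run.simps set_bind_pmf using aa t0 Some by force
      obtain ys where "\<tau>0 = [(Some i, Some (x i))] @ ys" using run_prefix[OF t0] by auto
      then have iacq: "i \<in> acquired \<tau>0" by (auto simp: acquired_def)
      have "measure_pmf.prob (\<beta> x) {r. acquired \<tau>0 \<subseteq> r} > 0"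
        by (rule semioffline_pos[OF xy tT])
      then obtain r where r: "r \<in> set_pmf (\<beta> x)" "acquired \<tau>0 \<subseteq> r"
        using measure_pmf_zero_iff[of "\<beta> x" "{r. acquired \<tau>0 \<subseteq> r}"] by auto
      have "a \<in> set_pmf (\<pi>sim' r (obs Obs x) [])"
        by (rule blocked_pos[OF offpolicy_pos[OF aa]]) (use Some r iacq in auto)
      then show ?thesis using r by blast
    qed
    then obtain r where r: "r \<in> set_pmf (\<beta> x)" "a \<in> set_pmf (\<pi>sim' r (obs Obs x) [])" by blast
    have "c x a = (\<Sum>r\<in>UNIV. pmf (\<pi>sim' r (obs Obs x) []) a * pmf (\<beta> x) r)"
      unfolding c_def by (subst integral_measure_pmf_real[of UNIV]) auto
    also have "\<dots> > 0"
      by (rule sum_pos2[of UNIV r]) (use r in \<open>auto simp: pmf_positive\<close>)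
    finally show ?thesis .
  qed
  have Qeq: "Qm [] a (obs Obs x) = Sa a (obs Obs x) / P (obs Obs x)"
    if xy: "(x, y) \<in> set_pmf pXY" and pa: "pmf (\<pi>\<^sub>\<alpha> (obs Obs x) []) a > 0" for x y a
  proof -
    have "Qm [] a (obs Obs x) = (c x a * Sa a (obs Obs x)) / (c x a * P (obs Obs x))"
      unfolding Qform sum_form Sa_def P_def by simp
    then show ?thesis using cpos[OF xy pa] by simp
  qed
  have V0eq: "pmf pXY z * V0 \<pi>\<^sub>\<alpha> Qm (ob z)
      = pmf pXY z * (\<Sum>a\<in>UNIV. pmf (\<pi>\<^sub>\<alpha> (ob z) []) a * (Sa a (ob z) / P (ob z)))" for z
  proof (cases "z \<in> set_pmf pXY")
    case False then show ?thesis by (simp add: set_pmf_iff)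
  next
    case True
    obtain x y where z: "z = (x, y)" by (cases z)
    have "V0 \<pi>\<^sub>\<alpha> Qm (ob z) = (\<Sum>a\<in>UNIV. pmf (\<pi>\<^sub>\<alpha> (ob z) []) a * (Sa a (ob z) / P (ob z)))"
      unfolding V0_def
    proof (intro sum.cong refl)
      fix a
      show "Qm [] a (ob z) * pmf (\<pi>\<^sub>\<alpha> (ob z) []) a = pmf (\<pi>\<^sub>\<alpha> (ob z) []) a * (Sa a (ob z) / P (ob z))"
      proof (cases "pmf (\<pi>\<^sub>\<alpha> (ob z) []) a > 0")
        case True
        then show ?thesis using Qeq[of x y a] \<open>z \<in> set_pmf pXY\<close> by (simp add: z ob_def)
      next
        case False
        then have "pmf (\<pi>\<^sub>\<alpha> (ob z) []) a = 0" using pmf_nonneg[of "\<pi>\<^sub>\<alpha> (ob z) []" a] by linarith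
        then show ?thesis by simp
      qed
    qed
    then show ?thesis by simp
  qed
  have part1: "measure_pmf.expectation p' (\<lambda>(x, y, r, \<tau>). V0 \<pi>\<^sub>\<alpha> Qm (obs Obs x)) = J_val Obs T pXY \<pi>\<^sub>\<alpha> Cost"
  proof -
    have "measure_pmf.expectation p' (\<lambda>(x, y, r, \<tau>). V0 \<pi>\<^sub>\<alpha> Qm (obs Obs x))
        = measure_pmf.expectation pXY (\<lambda>z. V0 \<pi>\<^sub>\<alpha> Qm (ob z))"
    proof -
      have fe: "(\<lambda>(x, y). V0 \<pi>\<^sub>\<alpha> Qm (obs Obs x)) = (\<lambda>z. V0 \<pi>\<^sub>\<alpha> Qm (ob z))"
        by (rule ext) (auto simp: ob_def split: prod.splits)
      show ?thesis unfolding p'_def psemi_expect by (simp add: fe[symmetric])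
    qed
    also have "\<dots> = (\<Sum>z\<in>UNIV. pmf pXY z * V0 \<pi>\<^sub>\<alpha> Qm (ob z))"
      by (subst integral_measure_pmf_real[of UNIV]) (auto simp: mult.commute)
    also have "\<dots> = (\<Sum>z\<in>UNIV. pmf pXY z * (\<Sum>a\<in>UNIV. pmf (\<pi>\<^sub>\<alpha> (ob z) []) a * (Sa a (ob z) / P (ob z))))"
      by (rule sum.cong[OF refl V0eq])
    also have "\<dots> = (\<Sum>a\<in>UNIV. \<Sum>z\<in>UNIV. pmf pXY z * (pmf (\<pi>\<^sub>\<alpha> (ob z) []) a * (Sa a (ob z) / P (ob z))))"
      unfolding sum_distrib_left by (rule sum.swap)
    also have "\<dots> = (\<Sum>a\<in>UNIV. \<Sum>z\<in>UNIV. pmf pXY z * (pmf (\<pi>\<^sub>\<alpha> (ob z) []) a * G (fst z) (snd z) a))"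
    proof (rule sum.cong[OF refl])
      fix a assume "a \<in> (UNIV :: 'f option set)"
      show "(\<Sum>z\<in>UNIV. pmf pXY z * (pmf (\<pi>\<^sub>\<alpha> (ob z) []) a * (Sa a (ob z) / P (ob z))))
          = (\<Sum>z\<in>UNIV. pmf pXY z * (pmf (\<pi>\<^sub>\<alpha> (ob z) []) a * G (fst z) (snd z) a))"
        unfolding Sa_def P_def
        using tower[of "pmf pXY" "\<lambda>w. pmf (\<pi>\<^sub>\<alpha> w []) a" ob "\<lambda>z. G (fst z) (snd z) a"]
        by (simp add: pmf_nonneg)
    qed
    also have "\<dots> = (\<Sum>z\<in>UNIV. (\<Sum>a\<in>UNIV. pmf (\<pi>\<^sub>\<alpha> (ob z) []) a * G (fst z) (snd z) a) * pmf pXY z)"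
      unfolding sum_distrib_right by (subst sum.swap) (simp add: mult_ac)
    also have "\<dots> = J_val Obs T pXY \<pi>\<^sub>\<alpha> Cost"
      unfolding J_val_def J_inner[OF T]
      by (subst integral_measure_pmf_real[of UNIV]) (auto simp: split_beta G_def ob_def)
    finally show ?thesis .
  qed
  define F where "F s = V0 \<pi>\<^sub>\<alpha> Qm (obs Obs (fst s))" for s :: "('f \<Rightarrow> 'v) \<times> 'y \<times> 'f set \<times> ('f, 'v) hist"
  define B where "B = Max (range (\<lambda>x. \<bar>V0 \<pi>\<^sub>\<alpha> Qm (obs Obs x)\<bar>))"
  have bnd: "\<bar>F s\<bar> \<le> B" for s unfolding F_def B_def by (rule Max_ge) auto
  have EF: "measure_pmf.expectation p' F = J_val Obs T pXY \<pi>\<^sub>\<alpha> Cost"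
  proof -
    have "F = (\<lambda>(x, y, r, \<tau>). V0 \<pi>\<^sub>\<alpha> Qm (obs Obs x))"
      by (rule ext) (auto simp: F_def split: prod.splits)
    then show ?thesis using part1 by simp
  qed
  show ?thesis
  proof
    show "measure_pmf.expectation (psemi Obs T pXY \<beta> \<pi>sim') (\<lambda>(x, y, r, \<tau>). V0 \<pi>\<^sub>\<alpha> Qm (obs Obs x))
        = J_val Obs T pXY \<pi>\<^sub>\<alpha> Cost" using part1 by (simp add: p'_def)
    show "\<forall>\<epsilon>>0. (\<lambda>n. measure M {\<omega> \<in> space M.
               \<bar>(\<Sum>i<n. V0 \<pi>\<^sub>\<alpha> Qm (obs Obs (fst (S i \<omega>)))) / real n - J_val Obs T pXY \<pi>\<^sub>\<alpha> Cost\<bar> > \<epsilon>})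
             \<longlonglongrightarrow> 0"
    proof (intro allI impI)
      fix \<epsilon> :: real assume e: "\<epsilon> > 0"
      show "(\<lambda>n. measure M {\<omega> \<in> space M.
               \<bar>(\<Sum>i<n. V0 \<pi>\<^sub>\<alpha> Qm (obs Obs (fst (S i \<omega>)))) / real n - J_val Obs T pXY \<pi>\<^sub>\<alpha> Cost\<bar> > \<epsilon>})
             \<longlonglongrightarrow> 0"
        using wlln_pmf[where F=F and B=B, OF M_prob S_meas[folded p'_def] S_dist[folded p'_def] S_indep[folded p'_def] bnd e]
        unfolding EF by (simp add: F_def)
    qed
  qed
qed

end
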